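(* Under the Standing Setup and Assumption (G) described in the context, let $V_{n-k}\subseteq\mathbf{F}_2^n$ be the subspace spanned by the last $n-k$ standard basis vectors. Then $$\mathcal{E}(PC_{f,\mathcal{T}})=\frac{1}{2^{k2^{s-1}}}\sum_{\alpha\in\mathbf{F}_2^{k2^{s-1}}}\ \prod_{c=0}^{2^s-1}\mathcal{E}\big(f_{\chi(c,\alpha)+V_{n-k}}\big).$$
   Context: Standing Setup. $f:\mathbf{F}_2^n\to\mathbf{F}_2$ is a Boolean function. $\mathbf{x}_1,\ldots,\mathbf{x}_n$ are binary sequences, $\mathbf{x}_j=(x_j(t))_{t\ge0}$, with $\mathbf{x}_j$ periodic of period $T_j$, i.e. $x_j(t)=x_j(t \bmod T_j)$. Let $s\ge1$ and integers $0=\ell_1<\ell_2<\cdots<\ell_{s+1}=k\le n$; variable $j$ belongs to block $i$ if $\ell_i<j\le\ell_{i+1}$. For $1\le i\le s$, $M_i=q_i\,\mathrm{lcm}(T_{\ell_i+1},\ldots,T_{\ell_{i+1}})$ with $q_i$ a positive integer. For $c=\sum_{i=1}^s c_i2^{i-1}\in\{0,\ldots,2^s-1\}$ with $c_i\in\{0,1\}$, put $\tau_c=\sum_{i=1}^s c_iM_i$, and $\mathcal{T}=\{\tau_c\}$. The parity-check sequence is $PC_{f,\mathcal{T}}(t)=\bigoplus_{c=0}^{2^s-1} f\big(x_1(t+\tau_c),\ldots,x_n(t+\tau_c)\big)$. The bias of a Boolean function $h$ of $m$ variables is $\mathcal{E}(h)=2^{-m}\sum_{x\in\mathbf{F}_2^m}(-1)^{h(x)}$.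 The bias $\mathcal{E}(PC_{f,\mathcal{T}})$ is the bias of $PC_{f,\mathcal{T}}(t)$ (for a fixed $t\ge0$) viewed as a Boolean function of the $T_1+\cdots+T_n$ bits $x_j(0),\ldots,x_j(T_j-1)$, $1\le j\le n$; equivalently $\mathbb{E}[(-1)^{PC_{f,\mathcal{T}}(t)}]$ when these bits are independent and uniform. Assumption (G): (i) for every $j$ with $k<j\le n$, the $2^s$ integers $\tau_c$ are pairwise incongruent modulo $T_j$; (ii) for every $i\in\{1,\ldots,s\}$ and every $j$ in block $i$, the $2^{s-1}$ integers $\sum_{l\ne i}c_lM_l$ ($c_l\in\{0,1\}$) are pairwise incongruent modulo $T_j$. The map $\chi$: write $\alpha\in\mathbf{F}_2^{k2^{s-1}}$ as $\alpha=(\alpha_1,\ldots,\alpha_k)$ with $\alpha_j=(\alpha_{j,0},\ldots,\alpha_{j,2^{s-1}-1})\in\mathbf{F}_2^{2^{s-1}}$. For $0\le c<2^s$ define $\chi(c,\alpha)=(\chi_1(c,\alpha),\ldots,\chi_k(c,\alpha),0,\ldots,0)\in\mathbf{F}_2^n$ (last $n-k$ coordinates zero), where for $j$ in block $i$, $\chi_j(c,\alpha)=\alpha_{j,m}$ with $m$ the integer obtained from the binary expansion of $c$ by deleting the bit $c_i$ (the bit of weight $2^{i-1}$); explicitly, if $c=2^iq+c_i2^{i-1}+r$ with $0\le r<2^{i-1}$, then $m=2^{i-1}q+r$. (Thus $\chi_j(c,\alpha)=\chi_j(c-2^{i-1},\alpha)$ whenever $c_i=1$.) For $a\in V_k$ (the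 span of the first $k$ standard basis vectors), the restriction $f_{a+V_{n-k}}$ is the Boolean function $y\in V_{n-k}\mapsto f(a+y)$ of $n-k$ variables, so $\mathcal{E}(f_{a+V_{n-k}})=2^{-(n-k)}\sum_{y\in V_{n-k}}(-1)^{f(a+y)}$. *)

theory Defs
  imports Complex_Main
begin

text \<open>Vectors of F_2^n are functions nat => bool, coordinates indexed 1..n,
  all other coordinates False.  Booleans: True = 1, False = 0.\<close>

definition F2vec :: "nat \<Rightarrow> (nat \<Rightarrow> bool) set" where
  "F2vec n = {x. \<forall>j. j \<notin> {1..n} \<longrightarrow> \<not> x j}"

definition Vlast :: "nat \<Rightarrow> nat \<Rightarrow> (nat \<Rightarrow> bool) set" where
  "Vlast n k = {y \<in> F2vec n. \<forall>j \<in> {1..k}. \<not> y j}"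

definition restr_bias :: "nat \<Rightarrow> nat \<Rightarrow> ((nat \<Rightarrow> bool) \<Rightarrow> bool) \<Rightarrow> (nat \<Rightarrow> bool) \<Rightarrow> real" where
  "restr_bias n k f a =
     (\<Sum>y\<in>Vlast n k. (if f (\<lambda>j. a j \<noteq> y j) then -1 else 1)) / 2 ^ (n - k)"

text \<open>Seeds: the bits x_j(0..T_j-1), 1 <= j <= n, as a function b j t.\<close>
definition seeds :: "nat \<Rightarrow> (nat \<Rightarrow> nat) \<Rightarrow> (nat \<Rightarrow> nat \<Rightarrow> bool) set" where
  "seeds n T = {b. \<forall>j t. (j \<notin> {1..n} \<or> t \<ge> T j) \<longrightarrow> \<not> b j t}"

definition bias_on :: "'a set \<Rightarrow> ('a \<Rightarrow> bool) \<Rightarrow> real" where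
  "bias_on A h = (\<Sum>x\<in>A. (if h x then -1 else 1)) / real (card A)"

text \<open>The i-th bit c_i of c (weight 2^(i-1)).\<close>
definition cbit :: "nat \<Rightarrow> nat \<Rightarrow> bool" where
  "cbit c i = odd (c div 2 ^ (i - 1))"

definition Mblk :: "(nat \<Rightarrow> nat) \<Rightarrow> (nat \<Rightarrow> nat) \<Rightarrow> (nat \<Rightarrow> nat) \<Rightarrow> nat \<Rightarrow> nat" where
  "Mblk T l q i = q i * Lcm (T ` {l i <.. l (Suc i)})"

definition tau :: "(nat \<Rightarrow> nat) \<Rightarrow> (nat \<Rightarrow> nat) \<Rightarrow> (nat \<Rightarrow> nat) \<Rightarrow> nat \<Rightarrow> nat \<Rightarrow> nat" where
  "tau T l q s c = (\<Sum>i=1..s. if cbit c i then Mblk T l q i else 0)"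

text \<open>Parity-check sequence PC_{f,T}(t) evaluated at seed b, with x_j(t) = b j (t mod T_j).\<close>
definition PC :: "nat \<Rightarrow> (nat \<Rightarrow> nat) \<Rightarrow> (nat \<Rightarrow> nat) \<Rightarrow> (nat \<Rightarrow> nat) \<Rightarrow> nat
    \<Rightarrow> ((nat \<Rightarrow> bool) \<Rightarrow> bool) \<Rightarrow> nat \<Rightarrow> (nat \<Rightarrow> nat \<Rightarrow> bool) \<Rightarrow> bool" where
  "PC n T l q s f t b =
     odd (card {c \<in> {..<2 ^ s}. f (\<lambda>j. b j ((t + tau T l q s c) mod T j))})"

definition blk :: "(nat \<Rightarrow> nat) \<Rightarrow> nat \<Rightarrow> nat \<Rightarrow> nat" where
  "blk l s j = (THE i. i \<in> {1..s} \<and> l i < j \<and> j \<le> l (Suc i))"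

text \<open>Delete bit c_i from c: c = 2^i q + c_i 2^(i-1) + r  gives  2^(i-1) q + r.\<close>
definition delbit :: "nat \<Rightarrow> nat \<Rightarrow> nat" where
  "delbit i c = 2 ^ (i - 1) * (c div 2 ^ i) + c mod 2 ^ (i - 1)"

definition chi :: "(nat \<Rightarrow> nat) \<Rightarrow> nat \<Rightarrow> nat \<Rightarrow> nat \<Rightarrow> (nat \<Rightarrow> nat \<Rightarrow> bool) \<Rightarrow> nat \<Rightarrow> bool" where
  "chi l s k c \<alpha> = (\<lambda>j. if j \<in> {1..k} then \<alpha> j (delbit (blk l s j) c) else False)"

definition alphas :: "nat \<Rightarrow> nat \<Rightarrow> (nat \<Rightarrow> nat \<Rightarrow> bool) set" where
  "alphas k s = {\<alpha>. \<forall>j m. (j \<notin> {1..k} \<or> m \<ge> 2 ^ (s - 1)) \<longrightarrow> \<not> \<alpha> j m}"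

end

theory Submission
  imports Defs
begin


lemma bit_split:
  fixes a r :: nat
  assumes "r < 2^q"
  shows "bit (2^q * a + r) n = (if n < q then bit r n else bit a (n - q))"
proof (cases "n < q")
  case True
  have e: "2^q * a = 2^n * (2^(q-n) * a)" using True
    by (metis le_add_diff_inverse less_imp_le_nat mult.assoc power_add)
  have "(2^q * a + r) div 2^n = 2^(q-n) * a + r div 2^n"
    unfolding e by simp
  moreover have "even (2^(q-n) * a)" using True by simp
  ultimately show ?thesis using True by (simp add: bit_nat_def)
next
  case False
  have "(2^q * a + r) div 2^q = a" using assms by simp
  hence "(2^q * a + r) div 2^n = a div 2^(n-q)"
    using False by (metis div_mult2_eq le_add_diff_inverse not_less power_add)
  then show ?thesis using False by (simp add: bit_nat_def)
qed

definition ins :: "nat \<Rightarrow> nat \<Rightarrow> nat" where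
  "ins i m = 2 ^ i * (m div 2 ^ (i - 1)) + m mod 2 ^ (i - 1)"

lemma bit_delbit:
  assumes "i \<ge> 1"
  shows "bit (delbit i c) n = (if n < i - 1 then bit c n else bit c (n + 1))"
proof -
  have "bit (delbit i c) n = (if n < i - 1 then bit (c mod 2^(i-1)) n else bit (c div 2^i) (n - (i-1)))"
    unfolding delbit_def by (rule bit_split) simp
  also have "\<dots> = (if n < i - 1 then bit c n else bit c (n + 1))"
    using assms by (auto simp add: bit_simps simp flip: take_bit_eq_mod drop_bit_eq_div)
  finally show ?thesis .
qed

lemma bit_ins:
  assumes "i \<ge> 1"
  shows "bit (ins i m) n = (if n < i - 1 then bit m n else if n = i - 1 then False else bit m (n - 1))"
proof -
  have "bit (ins i m) n = (if n < i then bit (m mod 2^(i-1)) n else bit (m div 2^(i-1)) (n - i))"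
    unfolding ins_def by (rule bit_split) (metis diff_le_self less_le_trans mod_less_divisor one_le_numeral power_increasing zero_less_numeral zero_less_power)
  also have "\<dots> = (if n < i - 1 then bit m n else if n = i - 1 then False else bit m (n - 1))"
    using assms by (auto simp add: bit_simps simp flip: take_bit_eq_mod drop_bit_eq_div)
  finally show ?thesis .
qed

lemma cbit_bit: "cbit c i = bit c (i - 1)"
  by (simp add: cbit_def bit_nat_def)

lemma bit_ins_delbit:
  assumes "i \<ge> 1"
  shows "bit (ins i (delbit i c)) n = (n \<noteq> i - 1 \<and> bit c n)"
  using assms by (auto simp add: bit_ins bit_delbit)

lemma delbit_ins:
  assumes "i \<ge> 1"
  shows "delbit i (ins i m) = m"
  by (rule bit_eqI) (use assms in \<open>auto simp add: bit_ins bit_delbit\<close>)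

lemma delbit_less:
  assumes "1 \<le> i" "i \<le> s" "c < 2 ^ s"
  shows "delbit i c < 2 ^ (s - 1)"
proof -
  have a: "c div 2^i < 2^(s-i)"
    using assms by (metis div_less_iff_less_mult le_add_diff_inverse power_add zero_less_numeral zero_less_power mult.commute)
  have "2^(i-1) * (c div 2^i + 1) \<le> 2^(i-1) * 2^(s-i)"
    using a by (intro mult_le_mono2) simp
  also have "\<dots> = 2^(s-1)" using assms by (simp flip: power_add)
  finally have "2^(i-1) * (c div 2^i) + 2^(i-1) \<le> 2^(s-1)" by simp
  moreover have "c mod 2^(i-1) < 2^(i-1)" by simp
  ultimately show ?thesis unfolding delbit_def by linarith
qed

lemma ins_less:
  assumes "1 \<le> i" "i \<le> s" "m < 2 ^ (s - 1)"
  shows "ins i m < 2 ^ s"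
proof -
  have "m < 2^(i-1) * 2^(s-i)" using assms by (simp flip: power_add)
  hence a: "m div 2^(i-1) < 2^(s-i)"
    by (simp add: div_less_iff_less_mult mult.commute)
  have "2^i * (m div 2^(i-1) + 1) \<le> 2^i * 2^(s-i)"
    using a by (intro mult_le_mono2) simp
  also have "\<dots> = 2^s" using assms by (simp flip: power_add)
  finally have "2^i * (m div 2^(i-1)) + 2^i \<le> 2^s" by simp
  moreover have "m mod 2^(i-1) < 2^i"
    by (metis diff_le_self less_le_trans mod_less_divisor one_le_numeral power_increasing zero_less_numeral zero_less_power)
  ultimately show ?thesis unfolding ins_def by linarith
qed

lemma not_cbit_ins: "i \<ge> 1 \<Longrightarrow> \<not> cbit (ins i m) i"
  by (simp add: cbit_bit bit_ins)

lemma tau_ins_delbit: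
  assumes "1 \<le> i" "i \<le> s"
  shows "tau T l q s c = tau T l q s (ins i (delbit i c)) + (if cbit c i then Mblk T l q i else 0)"
proof -
  have fin: "finite {1..s}" by simp
  have iin: "i \<in> {1..s}" using assms by simp
  have eq: "\<And>i'. i' \<in> {1..s} - {i} \<Longrightarrow> cbit (ins i (delbit i c)) i' = cbit c i'"
    using assms by (auto simp add: cbit_bit bit_ins_delbit)
  have "tau T l q s c = (if cbit c i then Mblk T l q i else 0) + (\<Sum>i'\<in>{1..s}-{i}. if cbit c i' then Mblk T l q i' else 0)"
    unfolding tau_def by (rule sum.remove[OF fin iin])
  moreover have "tau T l q s (ins i (delbit i c)) = 0 + (\<Sum>i'\<in>{1..s}-{i}. if cbit c i' then Mblk T l q i' else 0)"
    unfolding tau_def using assms eq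
    by (subst sum.remove[OF fin iin]) (simp add: cbit_bit bit_ins_delbit)
  ultimately show ?thesis by simp
qed



definition supp_set :: "'a set \<Rightarrow> ('a \<Rightarrow> bool) set" where
  "supp_set P = {b. \<forall>p. p \<notin> P \<longrightarrow> \<not> b p}"

definition rst :: "'a set \<Rightarrow> ('a \<Rightarrow> bool) \<Rightarrow> ('a \<Rightarrow> bool)" where
  "rst Q b = (\<lambda>p. p \<in> Q \<and> b p)"

lemma supp_set_Pow: "bij_betw (\<lambda>b. {p. b p}) (supp_set P) (Pow P)"
proof (rule bij_betw_byWitness[where f'="\<lambda>A p. p \<in> A"])
  show "\<forall>a\<in>supp_set P. (\<lambda>p. p \<in> {p. a p}) = a" by auto
  show "\<forall>a'\<in>Pow P. {p. p \<in> a'} = a'" by auto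
  show "(\<lambda>b. {p. b p}) ` supp_set P \<subseteq> Pow P" unfolding supp_set_def by auto
  show "(\<lambda>A p. p \<in> A) ` Pow P \<subseteq> supp_set P" unfolding supp_set_def by auto
qed

lemma finite_supp_set: "finite P \<Longrightarrow> finite (supp_set P)"
  by (metis bij_betw_finite[OF supp_set_Pow] finite_Pow_iff)

lemma card_supp_set: "finite P \<Longrightarrow> card (supp_set P) = 2 ^ card P"
  by (metis bij_betw_same_card[OF supp_set_Pow] card_Pow)

lemma split_bij:
  assumes "P \<inter> R = {}"
  shows "bij_betw (\<lambda>(a, w) p. a p \<or> w p) (supp_set P \<times> supp_set R) (supp_set (P \<union> R))"
proof -
  have inj: "inj_on (\<lambda>(a, w) p. a p \<or> w p) (supp_set P \<times> supp_set R)"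
  proof (rule inj_onI, clarify)
    fix a w a' w'
    assume h: "a \<in> supp_set P" "w \<in> supp_set R" "a' \<in> supp_set P" "w' \<in> supp_set R"
      "(\<lambda>p. a p \<or> w p) = (\<lambda>p. a' p \<or> w' p)"
    have "\<And>p. a p = a' p \<and> w p = w' p"
    proof -
      fix p
      have "a p \<or> w p \<longleftrightarrow> a' p \<or> w' p" using fun_cong[OF h(5), of p] by simp
      then show "a p = a' p \<and> w p = w' p"
        using h(1-4) assms unfolding supp_set_def by (cases "p \<in> P"; cases "p \<in> R") auto
    qed
    then show "a = a' \<and> w = w'" by auto
  qed
  have "(\<lambda>(a, w) p. a p \<or> w p) ` (supp_set P \<times> supp_set R) = supp_set (P \<union> R)"
  proof
    show "(\<lambda>(a, w) p. a p \<or> w p) ` (supp_set P \<times> supp_set R) \<subseteq> supp_set (P \<union> R)"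
      unfolding supp_set_def by auto
    show "supp_set (P \<union> R) \<subseteq> (\<lambda>(a, w) p. a p \<or> w p) ` (supp_set P \<times> supp_set R)"
    proof
      fix b assume b: "b \<in> supp_set (P \<union> R)"
      have "b = (\<lambda>(a, w) p. a p \<or> w p) (rst P b, rst R b)"
        using b unfolding supp_set_def rst_def by auto
      moreover have "(rst P b, rst R b) \<in> supp_set P \<times> supp_set R"
        unfolding supp_set_def rst_def by auto
      ultimately show "b \<in> (\<lambda>(a, w) p. a p \<or> w p) ` (supp_set P \<times> supp_set R)" by blast
    qed
  qed
  with inj show ?thesis unfolding bij_betw_def by blast
qed

lemma split_sum:
  fixes G :: "('a \<Rightarrow> bool) \<Rightarrow> 'b::comm_monoid_add"
  assumes "P \<inter> R = {}"
  shows "sum G (supp_set (P \<union> R)) = (\<Sum>a\<in>supp_set P. \<Sum>w\<in>supp_set R. G (\<lambda>p. a p \<or> w p))"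
proof -
  have "sum G (supp_set (P \<union> R)) = (\<Sum>x\<in>supp_set P \<times> supp_set R. G ((\<lambda>(a, w) p. a p \<or> w p) x))"
    by (rule sum.reindex_bij_betw[OF split_bij[OF assms], symmetric])
  also have "\<dots> = (\<Sum>a\<in>supp_set P. \<Sum>w\<in>supp_set R. G (\<lambda>p. a p \<or> w p))"
    by (simp add: sum.cartesian_product split_def)
  finally show ?thesis .
qed

lemma rst_or:
  assumes "a \<in> supp_set Q" "w \<in> supp_set R" "Q \<inter> R = {}"
  shows "rst Q (\<lambda>p. a p \<or> w p) = a" "rst R (\<lambda>p. a p \<or> w p) = w"
  using assms unfolding rst_def supp_set_def by (auto simp: fun_eq_iff)

lemma marg_sum:
  fixes G :: "('a \<Rightarrow> bool) \<Rightarrow> 'b::comm_semiring_1"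
  assumes fin: "finite P" and sub: "Q \<subseteq> P" and dep: "\<forall>b\<in>supp_set P. G b = G (rst Q b)"
  shows "sum G (supp_set P) = 2 ^ card (P - Q) * sum G (supp_set Q)"
proof -
  have PU: "P = Q \<union> (P - Q)" using sub by blast
  have "sum G (supp_set P) = (\<Sum>a\<in>supp_set Q. \<Sum>w\<in>supp_set (P - Q). G (\<lambda>p. a p \<or> w p))"
    by (subst PU, rule split_sum) blast
  also have "\<dots> = (\<Sum>a\<in>supp_set Q. \<Sum>w\<in>supp_set (P - Q). G a)"
  proof (intro sum.cong refl)
    fix a w assume a: "a \<in> supp_set Q" and w: "w \<in> supp_set (P - Q)"
    have "(\<lambda>p. a p \<or> w p) \<in> supp_set P" using a w sub unfolding supp_set_def by auto
    then have "G (\<lambda>p. a p \<or> w p) = G (rst Q (\<lambda>p. a p \<or> w p))" using dep by blast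
    also have "\<dots> = G a" using rst_or(1)[OF a w] by auto
    finally show "G (\<lambda>p. a p \<or> w p) = G a" .
  qed
  also have "\<dots> = 2 ^ card (P - Q) * sum G (supp_set Q)"
    using fin by (simp add: card_supp_set sum_distrib_right mult.commute)
  finally show ?thesis .
qed

lemma prod_sum:
  fixes H :: "'c \<Rightarrow> ('a \<Rightarrow> bool) \<Rightarrow> 'b::comm_semiring_1"
  assumes "finite C"
    and disj: "\<forall>c\<in>C. \<forall>c'\<in>C. c \<noteq> c' \<longrightarrow> R c \<inter> R c' = {}"
    and dep: "\<forall>c\<in>C. \<forall>b. H c b = H c (rst (R c) b)"
  shows "(\<Sum>b\<in>supp_set (\<Union>c\<in>C. R c). \<Prod>c\<in>C. H c b) = (\<Prod>c\<in>C. \<Sum>b\<in>supp_set (R c). H c b)"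
  using assms
proof (induction C rule: finite_induct)
  case empty
  show ?case by (simp add: card_supp_set)
next
  case (insert c C)
  let ?U = "\<Union>c\<in>C. R c"
  have disj: "R c \<inter> ?U = {}" using insert.prems(1) insert.hyps(2) 
  proof -
    { fix c' assume c': "c' \<in> C"
      then have "c \<noteq> c'" using insert.hyps(2) by auto
      then have "R c \<inter> R c' = {}" using insert.prems(1) c' by blast }
    then show ?thesis by blast
  qed
  have ih: "(\<Sum>w\<in>supp_set ?U. \<Prod>c'\<in>C. H c' w) = (\<Prod>c\<in>C. \<Sum>b\<in>supp_set (R c). H c b)"
  proof (rule insert.IH)
    show "\<forall>c\<in>C. \<forall>c'\<in>C. c \<noteq> c' \<longrightarrow> R c \<inter> R c' = {}" using insert.prems(1) by blast
    show "\<forall>c\<in>C. \<forall>b. H c b = H c (rst (R c) b)" using insert.prems(2) by blast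
  qed
  have "(\<Sum>b\<in>supp_set (\<Union>c\<in>insert c C. R c). \<Prod>c\<in>insert c C. H c b)
      = (\<Sum>a\<in>supp_set (R c). \<Sum>w\<in>supp_set ?U. \<Prod>c'\<in>insert c C. H c' (\<lambda>p. a p \<or> w p))"
    by (simp only: UN_insert split_sum[OF disj])
  also have "\<dots> = (\<Sum>a\<in>supp_set (R c). \<Sum>w\<in>supp_set ?U. H c a * (\<Prod>c'\<in>C. H c' w))"
  proof (intro sum.cong refl)
    fix a w assume a: "a \<in> supp_set (R c)" and w: "w \<in> supp_set ?U"
    have h1: "H c (\<lambda>p. a p \<or> w p) = H c a"
    proof -
      have "H c (\<lambda>p. a p \<or> w p) = H c (rst (R c) (\<lambda>p. a p \<or> w p))"
        using insert.prems(2) by blast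
      then show ?thesis using rst_or(1)[OF a w disj] by simp
    qed
    have h2: "H c' (\<lambda>p. a p \<or> w p) = H c' w" if c': "c' \<in> C" for c'
    proof -
      have "rst (R c') (\<lambda>p. a p \<or> w p) = rst (R c') w"
        using a c' disj unfolding rst_def supp_set_def by (auto simp: fun_eq_iff)
      moreover have "H c' (\<lambda>p. a p \<or> w p) = H c' (rst (R c') (\<lambda>p. a p \<or> w p))"
        using insert.prems(2) c' by blast
      moreover have "H c' w = H c' (rst (R c') w)"
        using insert.prems(2) c' by blast
      ultimately show ?thesis by simp
    qed
    have "(\<Prod>c'\<in>insert c C. H c' (\<lambda>p. a p \<or> w p)) = H c (\<lambda>p. a p \<or> w p) * (\<Prod>c'\<in>C. H c' (\<lambda>p. a p \<or> w p))"
      by (rule prod.insert[OF insert.hyps])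
    also have "(\<Prod>c'\<in>C. H c' (\<lambda>p. a p \<or> w p)) = (\<Prod>c'\<in>C. H c' w)"
      by (rule prod.cong[OF refl h2])
    finally show "(\<Prod>c'\<in>insert c C. H c' (\<lambda>p. a p \<or> w p)) = H c a * (\<Prod>c'\<in>C. H c' w)"
      using h1 by simp
  qed
  also have "\<dots> = (\<Sum>a\<in>supp_set (R c). H c a) * (\<Sum>w\<in>supp_set ?U. \<Prod>c'\<in>C. H c' w)"
    by (rule sum_product[symmetric])
  also have "\<dots> = (\<Sum>a\<in>supp_set (R c). H c a) * (\<Prod>c\<in>C. \<Sum>b\<in>supp_set (R c). H c b)"
    using ih by simp
  finally show ?case using insert.hyps by simp
qed
lemma transfer_bij:
  assumes "bij_betw \<phi> A B"
  shows "bij_betw (\<lambda>b x. x \<in> A \<and> b (\<phi> x)) (supp_set B) (supp_set A)"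
proof -
  let ?g = "the_inv_into A \<phi>"
  have g: "bij_betw ?g B A" by (rule bij_betw_the_inv_into[OF assms])
  show ?thesis
    unfolding bij_betw_def
  proof
    show "inj_on (\<lambda>b x. x \<in> A \<and> b (\<phi> x)) (supp_set B)"
    proof (rule inj_onI)
      fix b b' assume b: "b \<in> supp_set B" "b' \<in> supp_set B"
        and e: "(\<lambda>x. x \<in> A \<and> b (\<phi> x)) = (\<lambda>x. x \<in> A \<and> b' (\<phi> x))"
      show "b = b'"
      proof
        fix y show "b y = b' y"
        proof (cases "y \<in> B")
          case True
          then obtain x where x: "x \<in> A" "y = \<phi> x" using assms unfolding bij_betw_def by blast
          have "(x \<in> A \<and> b (\<phi> x)) = (x \<in> A \<and> b' (\<phi> x))" using fun_cong[OF e, of x] by simp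
          then show ?thesis using x by simp
        next
          case False then show ?thesis using b unfolding supp_set_def by blast
        qed
      qed
    qed
    show "(\<lambda>b x. x \<in> A \<and> b (\<phi> x)) ` supp_set B = supp_set A"
    proof
      show "(\<lambda>b x. x \<in> A \<and> b (\<phi> x)) ` supp_set B \<subseteq> supp_set A"
        unfolding supp_set_def by auto
      show "supp_set A \<subseteq> (\<lambda>b x. x \<in> A \<and> b (\<phi> x)) ` supp_set B"
      proof
        fix a assume a: "a \<in> supp_set A"
        define b where "b = (\<lambda>y. y \<in> B \<and> a (?g y))"
        have "b \<in> supp_set B" unfolding b_def supp_set_def by auto
        moreover have "(\<lambda>x. x \<in> A \<and> b (\<phi> x)) = a"
        proof
          fix x show "(x \<in> A \<and> b (\<phi> x)) = a x"
          proof (cases "x \<in> A")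
            case True
            then have "\<phi> x \<in> B" "?g (\<phi> x) = x"
              using assms by (auto simp: bij_betw_def the_inv_into_f_f)
            then show ?thesis using True unfolding b_def by simp
          next
            case False then show ?thesis using a unfolding supp_set_def by blast
          qed
        qed
        ultimately show "a \<in> (\<lambda>b x. x \<in> A \<and> b (\<phi> x)) ` supp_set B" by force
      qed
    qed
  qed
qed

lemma curry_bij:
  "bij_betw curry (supp_set (Sigma A B)) {b. \<forall>j u. (j \<notin> A \<or> u \<notin> B j) \<longrightarrow> \<not> b j u}"
  unfolding bij_betw_def supp_set_def
proof
  show "inj_on curry {b. \<forall>p. p \<notin> Sigma A B \<longrightarrow> \<not> b p}"
    by (rule inj_onI, drule arg_cong[where f=case_prod], simp)
  show "curry ` {b. \<forall>p. p \<notin> Sigma A B \<longrightarrow> \<not> b p} = {b. \<forall>j u. (j \<notin> A \<or> u \<notin> B j) \<longrightarrow> \<not> b j u}"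
  proof
    show "curry ` {b. \<forall>p. p \<notin> Sigma A B \<longrightarrow> \<not> b p} \<subseteq> {b. \<forall>j u. (j \<notin> A \<or> u \<notin> B j) \<longrightarrow> \<not> b j u}"
      by auto
    show "{b. \<forall>j u. (j \<notin> A \<or> u \<notin> B j) \<longrightarrow> \<not> b j u} \<subseteq> curry ` {b. \<forall>p. p \<notin> Sigma A B \<longrightarrow> \<not> b p}"
    proof
      fix b assume "b \<in> {b. \<forall>j u. (j \<notin> A \<or> u \<notin> B j) \<longrightarrow> \<not> b j u}"
      then have "case_prod b \<in> {b. \<forall>p. p \<notin> Sigma A B \<longrightarrow> \<not> b p}" by auto
      moreover have "b = curry (case_prod b)" by simp
      ultimately show "b \<in> curry ` {b. \<forall>p. p \<notin> Sigma A B \<longrightarrow> \<not> b p}" by blast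
    qed
  qed
qed

lemma parity_prod:
  assumes "finite C"
  shows "(if odd (card {c\<in>C. P c}) then -1 else 1::real) = (\<Prod>c\<in>C. if P c then -1 else 1)"
  using assms
proof (induction C rule: finite_induct)
  case empty then show ?case by simp
next
  case (insert c C)
  show ?case
  proof (cases "P c")
    case True
    then have "{x\<in>insert c C. P x} = insert c {x\<in>C. P x}" by auto
    moreover have "c \<notin> {x\<in>C. P x}" using insert.hyps by auto
    moreover have "finite {x\<in>C. P x}" using insert.hyps by auto
    ultimately show ?thesis using insert True by auto
  next
    case False
    then have "{x\<in>insert c C. P x} = {x\<in>C. P x}" by auto
    then show ?thesis using insert False by auto
  qed
qed



lemma l_mono_le:
  assumes mono: "\<forall>i \<in> {1..s}. l i < l (Suc i)"
  shows "1 \<le> a \<Longrightarrow> a \<le> b \<Longrightarrow> b \<le> Suc s \<Longrightarrow> (l a :: nat) \<le> l b"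
proof (induction b)
  case 0 then show ?case by simp
next
  case (Suc b)
  show ?case
  proof (cases "a = Suc b")
    case True then show ?thesis by simp
  next
    case False
    then have "a \<le> b" using Suc.prems by simp
    then have "l a \<le> l b" using Suc by simp
    moreover have "l b < l (Suc b)" using mono Suc.prems \<open>a \<le> b\<close> by auto
    ultimately show ?thesis by simp
  qed
qed

lemma blk_ex:
  assumes mono: "\<forall>i \<in> {1..s}. l i < l (Suc i)"
  shows "m \<le> s \<Longrightarrow> l 1 < j \<Longrightarrow> j \<le> l (Suc m) \<Longrightarrow> \<exists>i\<in>{1..m}. l i < (j::nat) \<and> j \<le> l (Suc i)"
proof (induction m)
  case 0 then show ?case by simp
next
  case (Suc m)
  show ?case
  proof (cases "j \<le> l (Suc m)")
    case True
    then show ?thesis using Suc by force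
  next
    case False
    then show ?thesis using Suc.prems by (intro bexI[of _ "Suc m"]) auto
  qed
qed

lemma blk_prop:
  assumes mono: "\<forall>i \<in> {1..s}. l i < l (Suc i)" and l1: "l 1 = 0" and ls: "l (Suc s) = k"
    and j: "j \<in> {1..k}"
  shows "blk l s j \<in> {1..s} \<and> l (blk l s j) < j \<and> j \<le> l (Suc (blk l s j))"
proof -
  have ex: "\<exists>i. i \<in> {1..s} \<and> l i < j \<and> j \<le> l (Suc i)"
    using blk_ex[OF mono, of s j] j l1 ls by auto
  have uniq: "i = i'" if "i \<in> {1..s} \<and> l i < j \<and> j \<le> l (Suc i)"
      "i' \<in> {1..s} \<and> l i' < j \<and> j \<le> l (Suc i')" for i i'
  proof (rule ccontr)
    assume "i \<noteq> i'"
    then consider "i < i'" | "i' < i" by linarith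
    then show False
    proof cases
      case 1
      then have "l (Suc i) \<le> l i'" using l_mono_le[OF mono, of "Suc i" i'] that by auto
      then show False using that by linarith
    next
      case 2
      then have "l (Suc i') \<le> l i" using l_mono_le[OF mono, of "Suc i'" i] that by auto
      then show False using that by linarith
    qed
  qed
  show ?thesis unfolding blk_def
    by (rule theI'[where P="\<lambda>i. i \<in> {1..s} \<and> l i < j \<and> j \<le> l (Suc i)"]) (use ex uniq in blast)
qed

lemma mod_add_cancel_nat: "((t::nat) + a) mod m = (t + b) mod m \<Longrightarrow> a mod m = b mod m"
  by (simp add: nat_mod_eq_iff)



theorem theorem2:
  fixes n k s :: nat and T q l :: "nat \<Rightarrow> nat"
    and f :: "(nat \<Rightarrow> bool) \<Rightarrow> bool" and t :: nat
  assumes T_pos: "\<forall>j \<in> {1..n}. T j > 0"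
    and s_pos: "s \<ge> 1"
    and l_first: "l 1 = 0"
    and l_mono: "\<forall>i \<in> {1..s}. l i < l (Suc i)"
    and l_last: "l (Suc s) = k"
    and k_le: "k \<le> n"
    and q_pos: "\<forall>i \<in> {1..s}. q i > 0"
    and G1: "\<forall>j \<in> {k<..n}. inj_on (\<lambda>c. tau T l q s c mod T j) {..<2 ^ s}"
    and G2: "\<forall>i \<in> {1..s}. \<forall>j \<in> {l i <.. l (Suc i)}.
               inj_on (\<lambda>c. tau T l q s c mod T j) {c. c < 2 ^ s \<and> \<not> cbit c i}"
  shows "bias_on (seeds n T) (PC n T l q s f t) =
           1 / 2 ^ (k * 2 ^ (s - 1)) *
           (\<Sum>\<alpha>\<in>alphas k s. \<Prod>c<2 ^ s. restr_bias n k f (chi l s k c \<alpha>))"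
proof -
  define pos where "pos c j = (t + tau T l q s c) mod T j" for c j
  define C where "C = {..<(2::nat)^s}"
  define Pall where "Pall = Sigma {1..n} (\<lambda>j. {..<T j})"
  define R where "R c = (\<lambda>j. (j, pos c j)) ` {k<..n}" for c
  define U where "U = (\<Union>c\<in>C. R c)"
  define Aa where "Aa = Sigma {1..k} (\<lambda>j. {..<(2::nat)^(s-1)})"
  define \<phi> where "\<phi> = (\<lambda>(j, m). (j, pos (ins (blk l s j) m) j))"
  define Pa where "Pa = \<phi> ` Aa"
  define alf where "alf a = curry (\<lambda>x. x \<in> Aa \<and> a (\<phi> x))" for a
  define psi where "psi c w = (\<lambda>j. j \<in> {k<..n} \<and> w (j, pos c j))" for c w
  define F where "F c b = (if f (\<lambda>j. b (j, pos c j)) then -1 else (1::real))" for c b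
  define H where "H a c w = (if f (\<lambda>j. chi l s k c (alf a) j \<noteq> psi c w j) then -1 else (1::real))" for a c w
  define X where "X = Pa \<union> U"

  have blk: "blk l s j \<in> {1..s} \<and> l (blk l s j) < j \<and> j \<le> l (Suc (blk l s j))" if "j \<in> {1..k}" for j
    using blk_prop[OF l_mono l_first l_last that] .
  have key: "pos (ins (blk l s j) (delbit (blk l s j) c)) j = pos c j" if j: "j \<in> {1..k}" for j c
  proof -
    let ?i = "blk l s j"
    have i: "1 \<le> ?i" "?i \<le> s" using blk[OF j] by auto
    have "T j dvd Mblk T l q ?i"
      unfolding Mblk_def using blk[OF j] by (intro dvd_mult dvd_Lcm) auto
    then obtain r where r: "(if cbit c ?i then Mblk T l q ?i else 0) = T j * r"
      by (cases "cbit c ?i") (auto elim!: dvdE)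
    have "tau T l q s c = tau T l q s (ins ?i (delbit ?i c)) + T j * r"
      using tau_ins_delbit[OF i, where T=T and l=l and q=q and c=c] r by simp
    then show ?thesis unfolding pos_def by (simp add: add.assoc[symmetric])
  qed
  have dl: "delbit (blk l s j) c < 2^(s-1)" if "j \<in> {1..k}" "c \<in> C" for j c
    using blk[OF that(1)] that(2) by (intro delbit_less) (auto simp: C_def)
  have posT: "pos c j < T j" if "j \<in> {1..n}" for c j
    unfolding pos_def using T_pos that by simp
  have finPall: "finite Pall" unfolding Pall_def by auto
  have finC: "finite C" unfolding C_def by simp
  have cardC: "card C = 2^s" unfolding C_def by simp

  have fstPa: "fst p \<in> {1..k}" if "p \<in> Pa" for p
    using that unfolding Pa_def \<phi>_def Aa_def by auto
  have fstU: "fst p \<in> {k<..n}" if "p \<in> U" for p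
    using that unfolding U_def R_def by auto
  have PaPall: "Pa \<subseteq> Pall"
    unfolding Pa_def \<phi>_def Aa_def Pall_def using k_le posT by auto
  have UPall: "U \<subseteq> Pall"
    unfolding U_def R_def Pall_def using posT by auto
  have XPall: "X \<subseteq> Pall" unfolding X_def using PaPall UPall by blast
  have PaU: "Pa \<inter> U = {}" using fstPa fstU by fastforce
  have Rdisj: "\<forall>c\<in>C. \<forall>c'\<in>C. c \<noteq> c' \<longrightarrow> R c \<inter> R c' = {}"
  proof (intro ballI impI)
    fix c c' assume c: "c \<in> C" "c' \<in> C" "c \<noteq> c'"
    show "R c \<inter> R c' = {}"
    proof (rule ccontr)
      assume "R c \<inter> R c' \<noteq> {}"
      then obtain j where j: "j \<in> {k<..n}" "pos c j = pos c' j" unfolding R_def by force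
      then have "tau T l q s c mod T j = tau T l q s c' mod T j"
        unfolding pos_def using mod_add_cancel_nat by blast
      then have "c = c'" using G1 j(1) c unfolding C_def by (auto dest: inj_onD)
      then show False using c by simp
    qed
  qed
  have injR: "inj_on (\<lambda>j. (j, pos c j)) {k<..n}" for c by (auto intro: inj_onI)
  have bijR: "bij_betw (\<lambda>j. (j, pos c j)) {k<..n} (R c)" for c
    unfolding R_def using injR by (simp add: bij_betw_def)
  have cardR: "card (R c) = n - k" for c
    using bij_betw_same_card[OF bijR] by simp
  have finR: "finite (R c)" for c unfolding R_def by simp
  have cardU: "card U = 2^s * (n - k)"
    unfolding U_def using card_UN_disjoint[OF finC, of R] finR Rdisj cardR cardC by simp
  have injphi: "inj_on \<phi> Aa"
  proof (rule inj_onI)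
    fix x y assume x: "x \<in> Aa" and y: "y \<in> Aa" and e: "\<phi> x = \<phi> y"
    obtain j m where xj: "x = (j, m)" by force
    obtain j' m' where yj: "y = (j', m')" by force
    have jj: "j = j'" using e unfolding xj yj \<phi>_def by simp
    let ?i = "blk l s j"
    have j: "j \<in> {1..k}" and m: "m < 2^(s-1)" and m': "m' < 2^(s-1)"
      using x y unfolding xj yj jj Aa_def by auto
    have i: "1 \<le> ?i" "?i \<le> s" using blk[OF j] by auto
    have "pos (ins ?i m) j = pos (ins ?i m') j" using e unfolding xj yj jj \<phi>_def by simp
    then have "tau T l q s (ins ?i m) mod T j = tau T l q s (ins ?i m') mod T j"
      unfolding pos_def using mod_add_cancel_nat by blast
    moreover have "ins ?i m \<in> {c. c < 2 ^ s \<and> \<not> cbit c ?i}" "ins ?i m' \<in> {c. c < 2 ^ s \<and> \<not> cbit c ?i}"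
      using ins_less[OF i m] ins_less[OF i m'] not_cbit_ins i by auto
    moreover have "j \<in> {l ?i <.. l (Suc ?i)}" using blk[OF j] by auto
    moreover have "inj_on (\<lambda>c. tau T l q s c mod T j) {c. c < 2 ^ s \<and> \<not> cbit c ?i}"
      using G2 i \<open>j \<in> {l ?i <.. l (Suc ?i)}\<close> by auto
    ultimately have "ins ?i m = ins ?i m'" by (meson inj_onD)
    then have "m = m'" using delbit_ins[OF i(1)] by metis
    then show "x = y" using xj yj jj by simp
  qed
  have bijphi: "bij_betw \<phi> Aa Pa" unfolding Pa_def using injphi by (simp add: bij_betw_def)
  have cardAa: "card Aa = k * 2^(s-1)" unfolding Aa_def by (simp add: card_SigmaI)
  have cardPa: "card Pa = k * 2^(s-1)" using bij_betw_same_card[OF bijphi] cardAa by simp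
  have finPa: "finite Pa" unfolding Pa_def Aa_def by simp
  have finU: "finite U" unfolding U_def using finC finR by simp
  have cardX: "card X = k * 2^(s-1) + 2^s * (n - k)"
    unfolding X_def using card_Un_disjoint[OF finPa finU PaU] cardPa cardU by simp
  have cardPall: "card Pall = card (Pall - X) + card X"
    using card_Diff_subset[OF finite_subset[OF XPall finPall] XPall] card_mono[OF finPall XPall] by simp

  have seeds_eq: "{b. \<forall>j u. (j \<notin> {1..n} \<or> u \<notin> {..<T j}) \<longrightarrow> \<not> b j u} = seeds n T"
    unfolding seeds_def by auto
  have bijseeds: "bij_betw curry (supp_set Pall) (seeds n T)"
    using curry_bij[of "{1..n}" "\<lambda>j. {..<T j}"] unfolding Pall_def seeds_eq .
  have card_seeds: "card (seeds n T) = 2 ^ card Pall"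
    using bij_betw_same_card[OF bijseeds] card_supp_set[OF finPall] by simp
  have PC_eq: "(if PC n T l q s f t (curry b) then -1 else 1::real) = (\<Prod>c\<in>C. F c b)" for b
  proof -
    have "PC n T l q s f t (curry b) = odd (card {c\<in>C. f (\<lambda>j. b (j, pos c j))})"
      unfolding PC_def C_def pos_def by simp
    then show ?thesis
      using parity_prod[OF finC, of "\<lambda>c. f (\<lambda>j. b (j, pos c j))"] unfolding F_def by simp
  qed
  have S1: "(\<Sum>b\<in>seeds n T. if PC n T l q s f t b then -1 else 1::real)
      = (\<Sum>b\<in>supp_set Pall. \<Prod>c\<in>C. F c b)"
    using sum.reindex_bij_betw[OF bijseeds, of "\<lambda>b. if PC n T l q s f t b then -1 else 1::real"]
    PC_eq by simp

  have depF: "\<forall>b\<in>supp_set Pall. (\<Prod>c\<in>C. F c b) = (\<Prod>c\<in>C. F c (rst X b))"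
  proof (intro ballI prod.cong refl)
    fix b c assume b: "b \<in> supp_set Pall" and c: "c \<in> C"
    have "(\<lambda>j. b (j, pos c j)) = (\<lambda>j. rst X b (j, pos c j))"
    proof
      fix j
      show "b (j, pos c j) = rst X b (j, pos c j)"
      proof (cases "b (j, pos c j)")
        case True
        then have "(j, pos c j) \<in> Pall" using b unfolding supp_set_def by blast
        then have jn: "j \<in> {1..n}" unfolding Pall_def by auto
        have "(j, pos c j) \<in> X"
        proof (cases "j \<le> k")
          case True
          then have j: "j \<in> {1..k}" using jn by auto
          have "(j, delbit (blk l s j) c) \<in> Aa" using dl[OF j c] j unfolding Aa_def by auto
          moreover have "\<phi> (j, delbit (blk l s j) c) = (j, pos c j)"
            unfolding \<phi>_def using key[OF j] by simp
          ultimately show ?thesis unfolding X_def Pa_def by force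
        next
          case False
          then have "(j, pos c j) \<in> R c" using jn unfolding R_def by auto
          then show ?thesis unfolding X_def U_def using c by blast
        qed
        then show ?thesis unfolding rst_def by simp
      next
        case False then show ?thesis unfolding rst_def by simp
      qed
    qed
    then show "F c b = F c (rst X b)" unfolding F_def by simp
  qed
  have S2: "(\<Sum>b\<in>supp_set Pall. \<Prod>c\<in>C. F c b) = 2 ^ card (Pall - X) * (\<Sum>b\<in>supp_set X. \<Prod>c\<in>C. F c b)"
    by (rule marg_sum[OF finPall XPall depF])

  have S3: "(\<Sum>b\<in>supp_set X. \<Prod>c\<in>C. F c b) = (\<Sum>a\<in>supp_set Pa. \<Sum>w\<in>supp_set U. \<Prod>c\<in>C. H a c w)"
  proof -
    have "(\<Sum>b\<in>supp_set X. \<Prod>c\<in>C. F c b) = (\<Sum>a\<in>supp_set Pa. \<Sum>w\<in>supp_set U. \<Prod>c\<in>C. F c (\<lambda>p. a p \<or> w p))"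
      unfolding X_def by (rule split_sum[OF PaU])
    also have "\<dots> = (\<Sum>a\<in>supp_set Pa. \<Sum>w\<in>supp_set U. \<Prod>c\<in>C. H a c w)"
    proof (intro sum.cong prod.cong refl)
      fix a w c assume a: "a \<in> supp_set Pa" and w: "w \<in> supp_set U" and c: "c \<in> C"
      have "(\<lambda>j. a (j, pos c j) \<or> w (j, pos c j)) = (\<lambda>j. chi l s k c (alf a) j \<noteq> psi c w j)"
      proof
        fix j
        have aout: "\<not> a (j, u)" if "j \<notin> {1..k}" for u
          using a fstPa[of "(j,u)"] that unfolding supp_set_def by auto
        have wout: "\<not> w (j, u)" if "j \<notin> {k<..n}" for u
          using w fstU[of "(j,u)"] that unfolding supp_set_def by auto
        show "(a (j, pos c j) \<or> w (j, pos c j)) = (chi l s k c (alf a) j \<noteq> psi c w j)"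
        proof (cases "j \<in> {1..k}")
          case True
          have "chi l s k c (alf a) j = a (j, pos c j)"
            unfolding chi_def alf_def using True dl[OF True c] key[OF True]
            by (simp add: Aa_def \<phi>_def)
          moreover have "\<not> psi c w j" "\<not> w (j, pos c j)" using True wout unfolding psi_def by auto
          ultimately show ?thesis by simp
        next
          case False
          then have "\<not> chi l s k c (alf a) j" "\<not> a (j, pos c j)" using aout unfolding chi_def by auto
          moreover have "psi c w j = w (j, pos c j)" using wout unfolding psi_def by auto
          ultimately show ?thesis by simp
        qed
      qed
      then show "F c (\<lambda>p. a p \<or> w p) = H a c w" unfolding F_def H_def by simp
    qed
    finally show ?thesis .
  qed

  have Vl: "Vlast n k = supp_set {k<..n}"
    unfolding Vlast_def F2vec_def supp_set_def by auto
  have S4: "(\<Sum>w\<in>supp_set U. \<Prod>c\<in>C. H a c w) = (\<Prod>c\<in>C. 2^(n-k) * restr_bias n k f (chi l s k c (alf a)))" for a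
  proof -
    have depH: "\<forall>c\<in>C. \<forall>w. H a c w = H a c (rst (R c) w)"
    proof (intro ballI allI)
      fix c w
      have "psi c (rst (R c) w) = psi c w"
        unfolding psi_def rst_def R_def by (auto simp: fun_eq_iff)
      then show "H a c w = H a c (rst (R c) w)" unfolding H_def by simp
    qed
    have "(\<Sum>w\<in>supp_set U. \<Prod>c\<in>C. H a c w) = (\<Prod>c\<in>C. \<Sum>w\<in>supp_set (R c). H a c w)"
      unfolding U_def by (rule prod_sum[OF finC Rdisj depH])
    also have "\<dots> = (\<Prod>c\<in>C. 2^(n-k) * restr_bias n k f (chi l s k c (alf a)))"
    proof (rule prod.cong[OF refl])
      fix c
      have bj: "bij_betw (psi c) (supp_set (R c)) (Vlast n k)"
        using transfer_bij[OF bijR[of c]] unfolding Vl psi_def by simp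
      have "(\<Sum>w\<in>supp_set (R c). H a c w) = (\<Sum>y\<in>Vlast n k. if f (\<lambda>j. chi l s k c (alf a) j \<noteq> y j) then -1 else 1::real)"
        using sum.reindex_bij_betw[OF bj, of "\<lambda>y. if f (\<lambda>j. chi l s k c (alf a) j \<noteq> y j) then -1 else 1::real"]
        unfolding H_def by simp
      also have "\<dots> = 2^(n-k) * restr_bias n k f (chi l s k c (alf a))"
        unfolding restr_bias_def by simp
      finally show "(\<Sum>w\<in>supp_set (R c). H a c w) = 2^(n-k) * restr_bias n k f (chi l s k c (alf a))" .
    qed
    finally show ?thesis .
  qed

  have alphas_eq: "{b. \<forall>j u. (j \<notin> {1..k} \<or> u \<notin> {..<(2::nat)^(s-1)}) \<longrightarrow> \<not> b j u} = alphas k s"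
    unfolding alphas_def by auto
  have bjalf: "bij_betw alf (supp_set Pa) (alphas k s)"
  proof -
    have "bij_betw (curry \<circ> (\<lambda>a x. x \<in> Aa \<and> a (\<phi> x))) (supp_set Pa) (alphas k s)"
    proof (rule bij_betw_trans[OF transfer_bij[OF bijphi]])
      show "bij_betw curry (supp_set Aa) (alphas k s)"
        using curry_bij[of "{1..k}" "\<lambda>j. {..<(2::nat)^(s-1)}"] unfolding Aa_def alphas_eq .
    qed
    then show ?thesis unfolding alf_def comp_def by simp
  qed
  have S5: "(\<Sum>a\<in>supp_set Pa. \<Prod>c\<in>C. restr_bias n k f (chi l s k c (alf a)))
      = (\<Sum>\<alpha>\<in>alphas k s. \<Prod>c<2 ^ s. restr_bias n k f (chi l s k c \<alpha>))"
    using sum.reindex_bij_betw[OF bjalf, of "\<lambda>\<alpha>. \<Prod>c<2 ^ s. restr_bias n k f (chi l s k c \<alpha>)"]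
    unfolding C_def by simp

  define \<Sigma> where "\<Sigma> = (\<Sum>\<alpha>\<in>alphas k s. \<Prod>c<2 ^ s. restr_bias n k f (chi l s k c \<alpha>))"
  have total: "(\<Sum>b\<in>seeds n T. if PC n T l q s f t b then -1 else 1::real)
      = 2 ^ card (Pall - X) * (2^(n-k))^(2^s) * \<Sigma>"
  proof -
    have "(\<Sum>a\<in>supp_set Pa. \<Sum>w\<in>supp_set U. \<Prod>c\<in>C. H a c w)
        = (\<Sum>a\<in>supp_set Pa. (2^(n-k))^(2^s) * (\<Prod>c\<in>C. restr_bias n k f (chi l s k c (alf a))))"
      by (simp add: S4 prod.distrib cardC)
    also have "\<dots> = (2^(n-k))^(2^s) * \<Sigma>"
      by (simp add: sum_distrib_left[symmetric] S5 \<Sigma>_def)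
    finally show ?thesis using S1 S2 S3 by simp
  qed
  have "bias_on (seeds n T) (PC n T l q s f t) = 2 ^ card (Pall - X) * (2^(n-k))^(2^s) * \<Sigma> / 2 ^ card Pall"
    unfolding bias_on_def total card_seeds by simp
  also have "(2::real) ^ card Pall = 2 ^ card (Pall - X) * (2^(n-k))^(2^s) * 2 ^ (k * 2 ^ (s - 1))"
    unfolding cardPall cardX by (simp add: power_add power_mult mult.commute mult.left_commute)
  finally show ?thesis unfolding \<Sigma>_def by simp
qed

end
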